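(* Let $X\supseteq\omega_1$. Then $\mathrm{SRP}(X)$ holds if and only if for every projectively stationary $S\subseteq[X]^\omega$ there exists a continuous increasing function $f:\omega_1\to S$ with $\bigcup\mathrm{ran}(f)\supseteq\omega_1$.
   Context: For an uncountable set $Z$, a club on $[Z]^\omega$ is a set of the form $\{Y\in[Z]^\omega: f[Y^{<\omega}]\subseteq Y\}$ for some $f:Z^{<\omega}\to Z$ (clubs on $\mathcal P(Z)$ are defined the same way with all subsets), and a set is stationary iff it meets every club. A set $S\subseteq[X]^\omega$ is projectively stationary iff $\omega_1\subseteq X$, $S$ is stationary, and $\{A\cap\omega_1: A\in S\}$ contains a club on $[\omega_1]^\omega$. $S$ strongly reflects on $Z\subseteq X$ iff $S\cap[Z]^\omega$ contains a club on $[Z]^\omega$. $\mathrm{SRP}(X)$: every projectively stationary $S\subseteq[X]^\omega$ strongly reflects on some $Z$ with $\omega_1\subseteq Z\subseteq X$ and $|Z|=\omega_1$. A function $f$ from an ordinal into sets is increasing iff $\alpha<\beta$ implies $f(\alpha)\subseteq f(\beta)$, and continuous iff $f(\lambda)=\bigcup_{\alpha<\lambda}f(\alpha)$ for every limit $\lambda$ in its domain. *)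

theory Defs
  imports Main "HOL-Library.Countable_Set" "HOL-Library.Equipollence"
begin

text \<open>omega1 W r: the set W, well-ordered by r, is (an isomorphic copy of) the ordinal omega_1:
  an uncountable well-order all of whose proper initial segments are countable.\<close>
definition omega1 :: "'a set \<Rightarrow> 'a rel \<Rightarrow> bool" where
  "omega1 W r \<longleftrightarrow> well_order_on W r \<and> \<not> countable W \<and>
     (\<forall>a\<in>W. countable {b. (b, a) \<in> r})"

definition ctbl_subsets :: "'a set \<Rightarrow> 'a set set" where
  "ctbl_subsets Z = {Y. Y \<subseteq> Z \<and> countable Y}"

text \<open>Club on [Z]^omega given by some f : Z^{<omega} \<rightarrow> Z (finite sequences = lists).\<close>
definition is_club :: "'a set \<Rightarrow> 'a set set \<Rightarrow> bool" where
  "is_club Z C \<longleftrightarrow> (\<exists>g :: 'a list \<Rightarrow> 'a. (\<forall>ys. set ys \<subseteq> Z \<longrightarrow> g ys \<in> Z) \<and>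
      C = {Y \<in> ctbl_subsets Z. \<forall>ys. set ys \<subseteq> Y \<longrightarrow> g ys \<in> Y})"

definition stationary :: "'a set \<Rightarrow> 'a set set \<Rightarrow> bool" where
  "stationary Z S \<longleftrightarrow> S \<subseteq> ctbl_subsets Z \<and> (\<forall>C. is_club Z C \<longrightarrow> S \<inter> C \<noteq> {})"

definition proj_stationary :: "'a set \<Rightarrow> 'a set \<Rightarrow> 'a set set \<Rightarrow> bool" where
  "proj_stationary W X S \<longleftrightarrow> W \<subseteq> X \<and> stationary X S \<and>
     (\<exists>C. is_club W C \<and> C \<subseteq> (\<lambda>A. A \<inter> W) ` S)"

definition strongly_reflects :: "'a set set \<Rightarrow> 'a set \<Rightarrow> bool" where
  "strongly_reflects S Z \<longleftrightarrow> (\<exists>C. is_club Z C \<and> C \<subseteq> S \<inter> ctbl_subsets Z)"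

definition SRP :: "'a set \<Rightarrow> 'a set \<Rightarrow> bool" where
  "SRP W X \<longleftrightarrow> (\<forall>S. S \<subseteq> ctbl_subsets X \<longrightarrow> proj_stationary W X S \<longrightarrow>
     (\<exists>Z. W \<subseteq> Z \<and> Z \<subseteq> X \<and> Z \<approx> W \<and> strongly_reflects S Z))"

text \<open>Limit points of the well-order r (0 is not a limit).\<close>
definition is_limit :: "'a rel \<Rightarrow> 'a \<Rightarrow> bool" where
  "is_limit r l \<longleftrightarrow> (\<exists>a. (a, l) \<in> r \<and> a \<noteq> l) \<and>
     (\<forall>a. (a, l) \<in> r \<and> a \<noteq> l \<longrightarrow> (\<exists>b. (a, b) \<in> r \<and> a \<noteq> b \<and> (b, l) \<in> r \<and> b \<noteq> l))"

definition increasing_on :: "'a set \<Rightarrow> 'a rel \<Rightarrow> ('a \<Rightarrow> 'b set) \<Rightarrow> bool" where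
  "increasing_on W r f \<longleftrightarrow> (\<forall>a\<in>W. \<forall>b\<in>W. (a, b) \<in> r \<and> a \<noteq> b \<longrightarrow> f a \<subseteq> f b)"

definition continuous_on_ord :: "'a set \<Rightarrow> 'a rel \<Rightarrow> ('a \<Rightarrow> 'b set) \<Rightarrow> bool" where
  "continuous_on_ord W r f \<longleftrightarrow>
     (\<forall>l\<in>W. is_limit r l \<longrightarrow> f l = (\<Union>a\<in>{a. (a, l) \<in> r \<and> a \<noteq> l}. f a))"

end

theory Submission
  imports Defs
begin


lemma om_sub: "omega1 W r \<Longrightarrow> r \<subseteq> W \<times> W"
  unfolding omega1_def well_order_on_def linear_order_on_def partial_order_on_def preorder_on_def by blast
lemma om_trans: "omega1 W r \<Longrightarrow> (a,b)\<in>r \<Longrightarrow> (b,c)\<in>r \<Longrightarrow> (a,c)\<in>r"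
  unfolding omega1_def well_order_on_def linear_order_on_def partial_order_on_def preorder_on_def
  by (meson transD)
lemma om_antisym: "omega1 W r \<Longrightarrow> (a,b)\<in>r \<Longrightarrow> (b,a)\<in>r \<Longrightarrow> a = b"
  unfolding omega1_def well_order_on_def linear_order_on_def partial_order_on_def preorder_on_def
  by (meson antisymD)
lemma om_refl: "omega1 W r \<Longrightarrow> a \<in> W \<Longrightarrow> (a,a)\<in>r"
  unfolding omega1_def well_order_on_def linear_order_on_def partial_order_on_def preorder_on_def
  by (meson refl_onD)
lemma om_total: "omega1 W r \<Longrightarrow> a \<in> W \<Longrightarrow> b \<in> W \<Longrightarrow> (a,b)\<in>r \<or> (b,a)\<in>r"
proof -
  assume om: "omega1 W r" and ab: "a \<in> W" "b \<in> W"
  have t: "total_on W r" using om unfolding omega1_def well_order_on_def linear_order_on_def by blast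
  show ?thesis
  proof (cases "a = b")
    case True then show ?thesis using om_refl[OF om ab(1)] by simp
  next
    case False then show ?thesis using t ab unfolding total_on_def by blast
  qed
qed
lemma om_ctbl: "omega1 W r \<Longrightarrow> countable {b. (b,a)\<in>r}"
proof (cases "a \<in> W")
  case True
  assume "omega1 W r" then show ?thesis using True unfolding omega1_def by blast
next
  case False
  assume "omega1 W r"
  then have "{b. (b,a)\<in>r} = {}" using om_sub[of W r] False by blast
  then show ?thesis by simp
qed

lemma om_bound:
  assumes om: "omega1 W r" and B: "countable B" "B \<subseteq> W"
  shows "\<exists>c\<in>W. \<forall>b\<in>B. (b,c)\<in>r \<and> b \<noteq> c"
proof -
  have "countable (\<Union>b\<in>B. {x. (x,b)\<in>r})" using B om_ctbl[OF om] by blast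
  moreover have "\<not> countable W" using om unfolding omega1_def by blast
  ultimately obtain c where c: "c \<in> W" "c \<notin> (\<Union>b\<in>B. {x. (x,b)\<in>r})"
    by (metis countable_subset subsetI)
  have "\<forall>b\<in>B. (b,c)\<in>r \<and> b \<noteq> c"
  proof
    fix b assume "b \<in> B"
    then have "(c,b) \<notin> r" "b \<in> W" using c B by auto
    then show "(b,c)\<in>r \<and> b \<noteq> c" using om_total[OF om c(1)] om_refl[OF om] by blast
  qed
  then show ?thesis using c by blast
qed

lemma om_nomax: "omega1 W r \<Longrightarrow> a \<in> W \<Longrightarrow> \<exists>c\<in>W. (a,c)\<in>r \<and> a \<noteq> c"
  using om_bound[of W r "{a}"] by auto

lemma om_least:
  assumes om: "omega1 W r" and P: "P \<subseteq> W" "x \<in> P"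
  shows "\<exists>m\<in>P. \<forall>y\<in>P. (m,y)\<in>r"
proof -
  have wf: "wf (r - Id)" using om unfolding omega1_def well_order_on_def by blast
  obtain m where m: "m \<in> P" "\<And>y. (y,m) \<in> r - Id \<Longrightarrow> y \<notin> P"
    using wfE_min[OF wf P(2)] by blast
  have "\<forall>y\<in>P. (m,y)\<in>r"
  proof
    fix y assume y: "y \<in> P"
    show "(m,y)\<in>r"
    proof (cases "y = m")
      case True then show ?thesis using om_refl[OF om] m P by auto
    next
      case False then show ?thesis using om_total[OF om, of m y] m y P by auto
    qed
  qed
  then show ?thesis using m by blast
qed

primrec clit :: "('a list \<Rightarrow> 'a) \<Rightarrow> 'a set \<Rightarrow> nat \<Rightarrow> 'a set" where
  "clit g A 0 = A"
| "clit g A (Suc n) = clit g A n \<union> g ` {ys. set ys \<subseteq> clit g A n}"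

definition cl :: "('a list \<Rightarrow> 'a) \<Rightarrow> 'a set \<Rightarrow> 'a set" where
  "cl g A = (\<Union>n. clit g A n)"

lemma clit_mono: "m \<le> n \<Longrightarrow> clit g A m \<subseteq> clit g A n"
  by (induction n rule: dec_induct) auto

lemma clit_countable: "countable A \<Longrightarrow> countable (clit g A n)"
proof (induction n)
  case 0 then show ?case by simp
next
  case (Suc n)
  have "{ys. set ys \<subseteq> clit g A n} = lists (clit g A n)" by auto
  then show ?case using Suc by simp
qed

lemma cl_countable: "countable A \<Longrightarrow> countable (cl g A)"
  unfolding cl_def using clit_countable by blast

lemma cl_base: "A \<subseteq> cl g A"
  unfolding cl_def by (metis UNIV_I UN_upper clit.simps(1))

lemma cl_list: "set ys \<subseteq> cl g A \<Longrightarrow> \<exists>n. set ys \<subseteq> clit g A n"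
proof (induction ys)
  case Nil then show ?case by simp
next
  case (Cons x xs)
  then obtain n where n: "set xs \<subseteq> clit g A n" by auto
  obtain m where m: "x \<in> clit g A m" using Cons.prems unfolding cl_def by auto
  have "set (x#xs) \<subseteq> clit g A (max n m)"
    using n m clit_mono[of n "max n m" g A] clit_mono[of m "max n m" g A] by auto
  then show ?case by blast
qed

lemma cl_closed: "set ys \<subseteq> cl g A \<Longrightarrow> g ys \<in> cl g A"
proof -
  assume "set ys \<subseteq> cl g A"
  then obtain n where "set ys \<subseteq> clit g A n" using cl_list by blast
  then have "g ys \<in> clit g A (Suc n)" by auto
  then show ?thesis unfolding cl_def by blast
qed

lemma cl_min:
  assumes "A \<subseteq> Y" "\<forall>ys. set ys \<subseteq> Y \<longrightarrow> g ys \<in> Y"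
  shows "cl g A \<subseteq> Y"
proof -
  have "clit g A n \<subseteq> Y" for n
    by (induction n) (use assms in auto)
  then show ?thesis unfolding cl_def by blast
qed

lemma cl_mono: "A \<subseteq> B \<Longrightarrow> cl g A \<subseteq> cl g B"
proof -
  assume "A \<subseteq> B"
  then have "A \<subseteq> cl g B" using cl_base[of B g] by blast
  moreover have "\<forall>ys. set ys \<subseteq> cl g B \<longrightarrow> g ys \<in> cl g B" using cl_closed by blast
  ultimately show ?thesis by (rule cl_min)
qed



lemma dir1:
  fixes X W :: "'a set" and r :: "'a rel"
  assumes om: "omega1 W r" and WX: "W \<subseteq> X" and srp: "SRP W X"
    and SX: "S \<subseteq> ctbl_subsets X" and ps: "proj_stationary W X S"
  shows "\<exists>f :: 'a \<Rightarrow> 'a set. (\<forall>a\<in>W. f a \<in> S) \<and> increasing_on W r f \<and>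
           continuous_on_ord W r f \<and> W \<subseteq> \<Union> (f ` W)"
proof -
  obtain Z where Z: "W \<subseteq> Z" "Z \<subseteq> X" "Z \<approx> W" "strongly_reflects S Z"
    using srp[unfolded SRP_def, rule_format, OF SX ps] by blast
  obtain C where C: "is_club Z C" "C \<subseteq> S \<inter> ctbl_subsets Z"
    using Z(4) unfolding strongly_reflects_def by blast
  obtain g :: "'a list \<Rightarrow> 'a" where g: "\<forall>ys. set ys \<subseteq> Z \<longrightarrow> g ys \<in> Z"
    and Cg: "C = {Y \<in> ctbl_subsets Z. \<forall>ys. set ys \<subseteq> Y \<longrightarrow> g ys \<in> Y}"
    using C(1) unfolding is_club_def by blast
  obtain \<phi> where "bij_betw \<phi> Z W" using Z(3) unfolding eqpoll_def by blast
  define h where "h = inv_into Z \<phi>"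
  have h: "bij_betw h W Z" unfolding h_def by (rule bij_betw_inv_into) fact
  define lt where "lt a = {b. (b,a)\<in>r \<and> b \<noteq> a}" for a
  define F where "F a = cl g (h ` lt a)" for a
  have ltW: "lt a \<subseteq> W" for a using om_sub[OF om] unfolding lt_def by blast
  have FS: "F a \<in> S" if "a \<in> W" for a
  proof -
    have "countable (lt a)" using om_ctbl[OF om, of a] unfolding lt_def
      by (rule countable_subset[rotated]) blast
    then have c: "countable (F a)" unfolding F_def by (intro cl_countable) simp
    have hW: "h ` W = Z" using h by (simp add: bij_betw_def)
    have hz: "h ` lt a \<subseteq> Z" using ltW[of a] hW by blast
    have "F a \<subseteq> Z" unfolding F_def by (rule cl_min) (use hz g in auto)
    then have "F a \<in> ctbl_subsets Z" unfolding ctbl_subsets_def using c by blast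
    moreover have "\<forall>ys. set ys \<subseteq> F a \<longrightarrow> g ys \<in> F a"
      unfolding F_def using cl_closed[of _ g "h ` lt a"] by blast
    ultimately have "F a \<in> C" unfolding Cg by blast
    then show ?thesis using C(2) by blast
  qed
  have inc: "F a \<subseteq> F b" if "(a,b)\<in>r" "a \<noteq> b" for a b
  proof -
    have "lt a \<subseteq> lt b" unfolding lt_def using that om_trans[OF om] om_antisym[OF om] by blast
    then show ?thesis unfolding F_def by (intro cl_mono) blast
  qed
  have cont: "F l = (\<Union>a\<in>{a. (a, l) \<in> r \<and> a \<noteq> l}. F a)" if l: "l \<in> W" "is_limit r l" for l
  proof
    show "(\<Union>a\<in>{a. (a, l) \<in> r \<and> a \<noteq> l}. F a) \<subseteq> F l" using inc by blast
    let ?U = "(\<Union>a\<in>{a. (a, l) \<in> r \<and> a \<noteq> l}. F a)"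
    have lst: "\<exists>a. (a,l)\<in>r \<and> a \<noteq> l \<and> set ys \<subseteq> F a" if "set ys \<subseteq> ?U" for ys
      using that
    proof (induction ys)
      case Nil then show ?case using l(2) unfolding is_limit_def by auto
    next
      case (Cons x xs)
      then obtain a where a: "(a,l)\<in>r" "a \<noteq> l" "set xs \<subseteq> F a" by auto
      obtain b where b: "(b,l)\<in>r" "b \<noteq> l" "x \<in> F b" using Cons.prems by auto
      have "a \<in> W" "b \<in> W" using a b om_sub[OF om] by auto
      then have "(a,b)\<in>r \<or> (b,a)\<in>r" using om_total[OF om] by blast
      then show ?case
      proof
        assume "(a,b)\<in>r" then have "F a \<subseteq> F b" using inc[of a b] by (cases "a=b") auto
        then show ?thesis using a b by auto
      next
        assume "(b,a)\<in>r" then have "F b \<subseteq> F a" using inc[of b a] by (cases "a=b") auto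
        then show ?thesis using a b by auto
      qed
    qed
    have "h ` lt l \<subseteq> ?U"
    proof
      fix x assume "x \<in> h ` lt l"
      then obtain b where b: "(b,l)\<in>r" "b\<noteq>l" "x = h b" unfolding lt_def by blast
      then obtain c where c: "(b,c)\<in>r" "b \<noteq> c" "(c,l)\<in>r" "c \<noteq> l"
        using l(2) unfolding is_limit_def by blast
      have "x \<in> h ` lt c" using b c unfolding lt_def by blast
      then have "x \<in> F c" using cl_base[of "h ` lt c" g] unfolding F_def by blast
      then show "x \<in> ?U" using c by blast
    qed
    moreover have "\<forall>ys. set ys \<subseteq> ?U \<longrightarrow> g ys \<in> ?U"
    proof (intro allI impI)
      fix ys assume "set ys \<subseteq> ?U"
      then obtain a where "(a,l)\<in>r" "a \<noteq> l" "set ys \<subseteq> F a" using lst by blast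
      then show "g ys \<in> ?U" using cl_closed[of ys g "h ` lt a"] unfolding F_def by blast
    qed
    ultimately show "F l \<subseteq> ?U" unfolding F_def by (rule cl_min)
  qed
  have cov: "W \<subseteq> \<Union> (F ` W)"
  proof
    fix w assume "w \<in> W"
    then have "w \<in> Z" using Z(1) by blast
    moreover have "h ` W = Z" using h by (simp add: bij_betw_def)
    ultimately obtain b where b: "b \<in> W" "w = h b" by blast
    obtain c where c: "c \<in> W" "(b,c)\<in>r" "b \<noteq> c" using om_nomax[OF om b(1)] by blast
    have "w \<in> h ` lt c" using b c unfolding lt_def by blast
    then have "w \<in> F c" using cl_base[of "h ` lt c" g] unfolding F_def by blast
    then show "w \<in> \<Union> (F ` W)" using c by blast
  qed
  show ?thesis
  proof -
    have "increasing_on W r F" unfolding increasing_on_def using inc by blast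
    moreover have "continuous_on_ord W r F" unfolding continuous_on_ord_def using cont by blast
    ultimately show ?thesis using FS cov by blast
  qed
qed



lemma card_eq:
  fixes W :: "'a set" and f :: "'a \<Rightarrow> 'a set"
  assumes om: "omega1 W r" and WZ: "W \<subseteq> (\<Union>a\<in>W. f a)" and ct: "\<forall>a\<in>W. countable (f a)"
  shows "(\<Union>a\<in>W. f a) \<approx> W"
proof (rule lepoll_antisym)
  show "W \<lesssim> (\<Union>a\<in>W. f a)" using WZ by (rule subset_imp_lepoll)
  have "\<not> countable W" using om unfolding omega1_def by blast
  then have inf: "infinite W" using countable_finite by blast
  then have "(UNIV::nat set) \<lesssim> W" by (simp add: infinite_le_lepoll)
  then obtain \<iota> :: "nat \<Rightarrow> 'a" where \<iota>: "inj \<iota>" "range \<iota> \<subseteq> W"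
    unfolding lepoll_def by blast
  define \<rho> where "\<rho> z = (SOME a. a \<in> W \<and> z \<in> f a)" for z
  have \<rho>: "\<rho> z \<in> W \<and> z \<in> f (\<rho> z)" if "z \<in> (\<Union>a\<in>W. f a)" for z
    using that unfolding \<rho>_def by (intro someI_ex[where P="\<lambda>a. a \<in> W \<and> z \<in> f a"]) blast
  define k where "k z = (\<rho> z, \<iota> (to_nat_on (f (\<rho> z)) z))" for z
  have "inj_on k (\<Union>a\<in>W. f a)"
  proof (rule inj_onI)
    fix x y assume xy: "x \<in> (\<Union>a\<in>W. f a)" "y \<in> (\<Union>a\<in>W. f a)" "k x = k y"
    then have e: "\<rho> x = \<rho> y" "to_nat_on (f (\<rho> x)) x = to_nat_on (f (\<rho> x)) y"
      unfolding k_def using \<iota>(1) by (auto dest: injD)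
    have "x \<in> f (\<rho> x)" "y \<in> f (\<rho> x)" "countable (f (\<rho> x))" using \<rho>[OF xy(1)] \<rho>[OF xy(2)] e(1) ct by auto
    then show "x = y" using e(2) inj_on_to_nat_on by (metis inj_onD)
  qed
  moreover have "k ` (\<Union>a\<in>W. f a) \<subseteq> W \<times> W" unfolding k_def using \<rho> \<iota>(2) by blast
  ultimately have "(\<Union>a\<in>W. f a) \<lesssim> W \<times> W" unfolding lepoll_def by blast
  moreover have "W \<times> W \<approx> W"
    unfolding eqpoll_iff_card_of_ordIso by (rule card_of_Times_same_infinite[OF inf])
  ultimately show "(\<Union>a\<in>W. f a) \<lesssim> W" by (rule lepoll_trans2)
qed

lemma dir2:
  fixes X W :: "'a set" and r :: "'a rel"
  assumes om: "omega1 W r" and WX: "W \<subseteq> X"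
    and SX: "S \<subseteq> ctbl_subsets X"
    and fS: "\<forall>a\<in>W. f a \<in> S" and inc: "increasing_on W r f"
    and cont: "continuous_on_ord W r f" and cov: "W \<subseteq> \<Union> (f ` W)"
  shows "\<exists>Z. W \<subseteq> Z \<and> Z \<subseteq> X \<and> Z \<approx> W \<and> strongly_reflects S Z"
proof -
  define Z where "Z = (\<Union>a\<in>W. f a)"
  have ct: "\<forall>a\<in>W. countable (f a)" and fX: "\<forall>a\<in>W. f a \<subseteq> X"
    using fS SX unfolding ctbl_subsets_def by blast+
  have ZX: "Z \<subseteq> X" unfolding Z_def using fX by blast
  have ZW: "Z \<approx> W" unfolding Z_def by (rule card_eq[OF om]) (use cov ct in auto)
  have WZ: "W \<subseteq> Z" using cov unfolding Z_def by simp
  have "\<not> countable W" using om unfolding omega1_def by blast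
  then obtain w0 where w0: "w0 \<in> W" by (metis countable_empty equals0I)
  define \<rho> where "\<rho> z = (SOME a. a \<in> W \<and> z \<in> f a)" for z
  have \<rho>: "\<rho> z \<in> W \<and> z \<in> f (\<rho> z)" if "z \<in> Z" for z
    using that unfolding \<rho>_def Z_def by (intro someI_ex[where P="\<lambda>a. a \<in> W \<and> z \<in> f a"]) blast
  define g where "g ys = (if ys = [] then w0 else from_nat_into (f (\<rho> (hd ys))) (length ys - 1))" for ys
  have gZ: "\<forall>ys. set ys \<subseteq> Z \<longrightarrow> g ys \<in> Z"
  proof (intro allI impI)
    fix ys assume ys: "set ys \<subseteq> Z"
    show "g ys \<in> Z"
    proof (cases "ys = []")
      case True then show ?thesis using w0 WZ unfolding g_def by auto
    next
      case False
      then have "hd ys \<in> Z" using ys hd_in_set by blast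
      then have "\<rho> (hd ys) \<in> W" "f (\<rho> (hd ys)) \<noteq> {}" using \<rho> by blast+
      then have "g ys \<in> f (\<rho> (hd ys))" unfolding g_def using False from_nat_into by simp
      then show ?thesis unfolding Z_def using \<open>\<rho> (hd ys) \<in> W\<close> by blast
    qed
  qed
  define C where "C = {Y \<in> ctbl_subsets Z. \<forall>ys. set ys \<subseteq> Y \<longrightarrow> g ys \<in> Y}"
  have club: "is_club Z C" unfolding is_club_def C_def using gZ by blast
  have CS: "C \<subseteq> S"
  proof
    fix Y assume "Y \<in> C"
    then have Y: "Y \<subseteq> Z" "countable Y" "\<forall>ys. set ys \<subseteq> Y \<longrightarrow> g ys \<in> Y"
      unfolding C_def ctbl_subsets_def by blast+
    have w0Y: "w0 \<in> Y" using Y(3) unfolding g_def by (metis empty_subsetI list.set(1))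
    have sub: "f (\<rho> y) \<subseteq> Y" if y: "y \<in> Y" for y
    proof
      fix x assume x: "x \<in> f (\<rho> y)"
      have yZ: "\<rho> y \<in> W" using \<rho> Y(1) y by blast
      have "countable (f (\<rho> y))" using ct yZ by blast
      then obtain n where n: "x = from_nat_into (f (\<rho> y)) n"
        using x subset_range_from_nat_into by blast
      have "g (replicate (Suc n) y) = x" unfolding g_def n by simp
      moreover have "set (replicate (Suc n) y) \<subseteq> Y"
      proof -
        have e: "set (replicate (Suc n) y) = {y}" by (rule set_replicate_Suc)
        show ?thesis unfolding e using y by blast
      qed
      moreover have "set (replicate (Suc n) y) \<subseteq> Y \<longrightarrow> g (replicate (Suc n) y) \<in> Y"
        using Y(3) by (rule spec)
      ultimately show "x \<in> Y" by simp
    qed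
    define B where "B = \<rho> ` Y"
    have BW: "B \<subseteq> W" unfolding B_def using \<rho> Y(1) by blast
    have Bc: "countable B" unfolding B_def using Y(2) by simp
    obtain c where c: "c \<in> W" "\<forall>b\<in>B. (b,c)\<in>r \<and> b \<noteq> c" using om_bound[OF om Bc BW] by blast
    define U where "U = {c\<in>W. \<forall>b\<in>B. (b,c)\<in>r}"
    have "c \<in> U" unfolding U_def using c by blast
    then obtain \<delta> where \<delta>: "\<delta> \<in> U" "\<forall>u\<in>U. (\<delta>,u)\<in>r"
      using om_least[OF om, of U c] unfolding U_def by blast
    have \<delta>W: "\<delta> \<in> W" using \<delta> unfolding U_def by blast
    have le: "f b \<subseteq> f \<delta>" if "b \<in> B" for b
    proof (cases "b = \<delta>")
      case True then show ?thesis by simp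
    next
      case False
      have "(b,\<delta>)\<in>r" using \<delta>(1) that unfolding U_def by blast
      moreover have "b \<in> W" using that BW by blast
      ultimately show ?thesis using inc \<delta>W False unfolding increasing_on_def by blast
    qed
    have YB: "Y \<subseteq> (\<Union>b\<in>B. f b)" unfolding B_def using \<rho> Y(1) by blast
    have BY: "f b \<subseteq> Y" if "b \<in> B" for b using sub that unfolding B_def by blast
    show "Y \<in> S"
    proof (cases "\<delta> \<in> B")
      case True
      have "Y = f \<delta>" using YB le BY[OF True] by blast
      then show ?thesis using fS \<delta>W by simp
    next
      case False
      have strict: "(b,\<delta>)\<in>r \<and> b \<noteq> \<delta>" if "b \<in> B" for b
      proof
        show "(b,\<delta>)\<in>r" using \<delta>(1) that unfolding U_def by blast
        show "b \<noteq> \<delta>" using False that by blast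
      qed
      have below: "\<exists>b\<in>B. (a,b)\<in>r \<and> a \<noteq> b" if a: "(a,\<delta>)\<in>r" "a \<noteq> \<delta>" for a
      proof -
        have aW: "a \<in> W" using a om_sub[OF om] by blast
        have "a \<notin> U"
        proof
          assume "a \<in> U" then have "(\<delta>,a)\<in>r" using \<delta> by blast
          then show False using a om_antisym[OF om] by blast
        qed
        then obtain b where b: "b \<in> B" "(b,a) \<notin> r" unfolding U_def using aW by blast
        then have "(a,b)\<in>r" using om_total[OF om aW] BW by blast
        moreover have "a \<noteq> b" using b om_refl[OF om] aW by blast
        ultimately show ?thesis using b by blast
      qed
      have lim: "is_limit r \<delta>"
        unfolding is_limit_def
      proof (intro conjI allI impI)
        have "\<rho> w0 \<in> B" unfolding B_def using w0Y by blast
        then show "\<exists>a. (a, \<delta>) \<in> r \<and> a \<noteq> \<delta>" using strict by blast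
      next
        fix a assume "(a, \<delta>) \<in> r \<and> a \<noteq> \<delta>"
        then obtain b where "b \<in> B" "(a,b)\<in>r" "a \<noteq> b" using below by blast
        then show "\<exists>b. (a, b) \<in> r \<and> a \<noteq> b \<and> (b, \<delta>) \<in> r \<and> b \<noteq> \<delta>" using strict by blast
      qed
      have fd: "f \<delta> = (\<Union>a\<in>{a. (a, \<delta>) \<in> r \<and> a \<noteq> \<delta>}. f a)"
        using cont lim \<delta>W unfolding continuous_on_ord_def by blast
      have "Y \<subseteq> f \<delta>" unfolding fd using YB strict by blast
      moreover have "f \<delta> \<subseteq> Y"
      proof -
        have "f a \<subseteq> Y" if a: "(a,\<delta>)\<in>r" "a \<noteq> \<delta>" for a
        proof -
          obtain b where b: "b \<in> B" "(a,b)\<in>r" "a \<noteq> b" using below[OF a] by blast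
          have "a \<in> W" using a om_sub[OF om] by blast
          then have "f a \<subseteq> f b" using inc b BW unfolding increasing_on_def by blast
          then show ?thesis using BY[OF b(1)] by blast
        qed
        then show ?thesis unfolding fd by blast
      qed
      ultimately have "Y = f \<delta>" by blast
      then show ?thesis using fS \<delta>W by simp
    qed
  qed
  have "C \<subseteq> S \<inter> ctbl_subsets Z" using CS unfolding C_def by blast
  then have "strongly_reflects S Z" unfolding strongly_reflects_def using club by blast
  then show ?thesis using WZ ZX ZW by blast
qed

theorem mainTheorem12:
  fixes X W :: "'a set" and r :: "'a rel"
  assumes "omega1 W r" and "W \<subseteq> X"
  shows "SRP W X \<longleftrightarrow>
    (\<forall>S. S \<subseteq> ctbl_subsets X \<longrightarrow> proj_stationary W X S \<longrightarrow>
       (\<exists>f :: 'a \<Rightarrow> 'a set. (\<forall>a\<in>W. f a \<in> S) \<and> increasing_on W r f \<and>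
           continuous_on_ord W r f \<and> W \<subseteq> \<Union> (f ` W)))"
proof
  assume "SRP W X"
  then show "\<forall>S. S \<subseteq> ctbl_subsets X \<longrightarrow> proj_stationary W X S \<longrightarrow>
       (\<exists>f :: 'a \<Rightarrow> 'a set. (\<forall>a\<in>W. f a \<in> S) \<and> increasing_on W r f \<and>
           continuous_on_ord W r f \<and> W \<subseteq> \<Union> (f ` W))"
    using dir1[OF assms] by blast
next
  assume R: "\<forall>S. S \<subseteq> ctbl_subsets X \<longrightarrow> proj_stationary W X S \<longrightarrow>
       (\<exists>f :: 'a \<Rightarrow> 'a set. (\<forall>a\<in>W. f a \<in> S) \<and> increasing_on W r f \<and>
           continuous_on_ord W r f \<and> W \<subseteq> \<Union> (f ` W))"
  show "SRP W X" unfolding SRP_def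
  proof (intro allI impI)
    fix S assume S: "S \<subseteq> ctbl_subsets X" "proj_stationary W X S"
    then obtain f :: "'a \<Rightarrow> 'a set" where f: "\<forall>a\<in>W. f a \<in> S" "increasing_on W r f"
      "continuous_on_ord W r f" "W \<subseteq> \<Union> (f ` W)" using R by blast
    show "\<exists>Z. W \<subseteq> Z \<and> Z \<subseteq> X \<and> Z \<approx> W \<and> strongly_reflects S Z"
      by (rule dir2[OF assms S(1) f])
  qed
qed

end
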